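(* Let $k$ be a field, $R=k[x,y]$, $I=(x^d,y^d,x^by^{d-b})$ with $d\ge2$, $1\le b\le d-b$, $\gcd(d,b)=1$, $J=(x^d,y^d)$, and for $\ell\ge1$ write $JI^{\ell-1}:I^\ell=(x^{s_\ell},y^{t_\ell})$ with nonnegative integers $s_\ell,t_\ell$. Then: (i) there is a least index $\ell_0\ge1$ such that $s_{\ell_0}=1$ or $t_{\ell_0}=1$; (ii) there is a least index $\ell_0'\ge1$ such that $s_{\ell_0'}=t_{\ell_0'}=1$, i.e. $JI^{\ell_0'-1}:I^{\ell_0'}=(x,y)$; (iii) $\ell_0'\ge d-\ell_0$. *)

theory Defs
  imports "HOL-Computational_Algebra.Polynomial"
begin

text \<open>The bivariate polynomial ring k[x,y] is represented as ('a poly) poly: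
  polynomials in y whose coefficients are polynomials in x.\<close>

definition var_x :: "'a::field poly poly" where
  "var_x = monom (monom 1 1) 0"

definition var_y :: "'a::field poly poly" where
  "var_y = monom 1 1"

definition gen_ideal :: "'r::comm_ring_1 set \<Rightarrow> 'r set" where
  "gen_ideal S = {f. \<exists>F c. finite F \<and> F \<subseteq> S \<and> f = (\<Sum>g\<in>F. c g * g)}"

definition ideal_prod :: "'r::comm_ring_1 set \<Rightarrow> 'r set \<Rightarrow> 'r set" where
  "ideal_prod A B = gen_ideal {a * b | a b. a \<in> A \<and> b \<in> B}"

fun ideal_pow :: "'r::comm_ring_1 set \<Rightarrow> nat \<Rightarrow> 'r set" where
  "ideal_pow A 0 = UNIV"
| "ideal_pow A (Suc n) = ideal_prod A (ideal_pow A n)"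

definition ideal_colon :: "'r::comm_ring_1 set \<Rightarrow> 'r set \<Rightarrow> 'r set" where
  "ideal_colon A B = {f. \<forall>g\<in>B. f * g \<in> A}"

definition I_id :: "nat \<Rightarrow> nat \<Rightarrow> 'a::field poly poly set" where
  "I_id d b = gen_ideal {var_x ^ d, var_y ^ d, var_x ^ b * var_y ^ (d - b)}"

definition J_id :: "nat \<Rightarrow> 'a::field poly poly set" where
  "J_id d = gen_ideal {var_x ^ d, var_y ^ d}"

definition colonI :: "nat \<Rightarrow> nat \<Rightarrow> nat \<Rightarrow> 'a::field poly poly set" where
  "colonI d b l = ideal_colon (ideal_prod (J_id d) (ideal_pow (I_id d b) (l - 1)))
                              (ideal_pow (I_id d b) l)"

definition s_exp :: "'a::field itself \<Rightarrow> nat \<Rightarrow> nat \<Rightarrow> nat \<Rightarrow> nat" where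
  "s_exp _ d b l = (LEAST s. (var_x ^ s :: 'a poly poly) \<in> colonI d b l)"

definition t_exp :: "'a::field itself \<Rightarrow> nat \<Rightarrow> nat \<Rightarrow> nat \<Rightarrow> nat" where
  "t_exp _ d b l = (LEAST t. (var_y ^ t :: 'a poly poly) \<in> colonI d b l)"

end

theory Submission imports Defs "HOL-Number_Theory.Cong" begin


definition is_ideal :: "'r::comm_ring_1 set \<Rightarrow> bool" where
  "is_ideal K \<longleftrightarrow> 0 \<in> K \<and> (\<forall>x\<in>K. \<forall>y\<in>K. x + y \<in> K) \<and> (\<forall>r. \<forall>x\<in>K. r * x \<in> K)"

lemma gen_ideal_base: "s \<in> S \<Longrightarrow> s \<in> gen_ideal S"
  unfolding gen_ideal_def
  by (rule CollectI, rule exI[of _ "{s}"], rule exI[of _ "\<lambda>_. 1"]) auto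

lemma gen_ideal_min:
  assumes "is_ideal K" "S \<subseteq> K" shows "gen_ideal S \<subseteq> K"
proof
  fix f assume "f \<in> gen_ideal S"
  then obtain F c where F: "finite F" "F \<subseteq> S" "f = (\<Sum>g\<in>F. c g * g)"
    unfolding gen_ideal_def by blast
  have "F \<subseteq> S \<Longrightarrow> (\<Sum>g\<in>F. c g * g) \<in> K" using F(1)
  proof (induction F rule: finite_induct)
    case empty then show ?case using assms(1) unfolding is_ideal_def by simp
  next
    case (insert x F) then show ?case using assms unfolding is_ideal_def by auto
  qed
  then show "f \<in> K" using F by simp
qed

lemma is_ideal_gen: "is_ideal (gen_ideal S)"
  unfolding is_ideal_def
proof (intro conjI ballI allI)
  show "0 \<in> gen_ideal S" unfolding gen_ideal_def by (rule CollectI, rule exI[of _ "{}"]) auto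
next
  fix x y assume "x \<in> gen_ideal S" "y \<in> gen_ideal S"
  then obtain F c G e where F: "finite F" "F \<subseteq> S" "x = (\<Sum>g\<in>F. c g * g)"
    and G: "finite G" "G \<subseteq> S" "y = (\<Sum>g\<in>G. e g * g)"
    unfolding gen_ideal_def by blast
  define h where "h g = (if g \<in> F then c g else 0) + (if g \<in> G then e g else 0)" for g
  have 1: "(\<Sum>g\<in>F \<union> G. (if g \<in> F then c g else 0) * g) = x"
  proof -
    have "(\<Sum>g\<in>F \<union> G. (if g \<in> F then c g else 0) * g) = (\<Sum>g\<in>F \<union> G. if g \<in> F then c g * g else 0)"
      by (rule sum.cong) auto
    also have "\<dots> = (\<Sum>g\<in>F. if g \<in> F then c g * g else 0)"
      by (rule sum.mono_neutral_right) (use F G in auto)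
    also have "\<dots> = (\<Sum>g\<in>F. c g * g)" by (rule sum.cong) auto
    finally show ?thesis using F by simp
  qed
  have 2: "(\<Sum>g\<in>F \<union> G. (if g \<in> G then e g else 0) * g) = y"
  proof -
    have "(\<Sum>g\<in>F \<union> G. (if g \<in> G then e g else 0) * g) = (\<Sum>g\<in>F \<union> G. if g \<in> G then e g * g else 0)"
      by (rule sum.cong) auto
    also have "\<dots> = (\<Sum>g\<in>G. if g \<in> G then e g * g else 0)"
      by (rule sum.mono_neutral_right) (use F G in auto)
    also have "\<dots> = (\<Sum>g\<in>G. e g * g)" by (rule sum.cong) auto
    finally show ?thesis using G by simp
  qed
  have "x + y = (\<Sum>g\<in>F \<union> G. h g * g)"
    unfolding h_def distrib_right sum.distrib 1 2 ..
  then show "x + y \<in> gen_ideal S" unfolding gen_ideal_def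
    by (intro CollectI exI[of _ "F \<union> G"] exI[of _ h]) (use F G in auto)
next
  fix r x assume "x \<in> gen_ideal S"
  then obtain F c where F: "finite F" "F \<subseteq> S" "x = (\<Sum>g\<in>F. c g * g)"
    unfolding gen_ideal_def by blast
  have "r * x = (\<Sum>g\<in>F. (r * c g) * g)" using F by (simp add: sum_distrib_left mult.assoc del: sum.cong)
  then show "r * x \<in> gen_ideal S" unfolding gen_ideal_def
    by (intro CollectI exI[of _ F] exI[of _ "\<lambda>g. r * c g"]) (use F in auto)
qed

lemma gen_ideal_add: "x \<in> gen_ideal S \<Longrightarrow> y \<in> gen_ideal S \<Longrightarrow> x + y \<in> gen_ideal S"
  using is_ideal_gen unfolding is_ideal_def by blast
lemma gen_ideal_mult: "x \<in> gen_ideal S \<Longrightarrow> r * x \<in> gen_ideal S"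
  using is_ideal_gen unfolding is_ideal_def by blast
lemma gen_ideal_0: "0 \<in> gen_ideal S"
  using is_ideal_gen unfolding is_ideal_def by blast
lemma gen_ideal_sum: "(\<And>i. i \<in> F \<Longrightarrow> f i \<in> gen_ideal S) \<Longrightarrow> (\<Sum>i\<in>F. f i) \<in> gen_ideal S"
  by (induction F rule: infinite_finite_induct) (auto intro: gen_ideal_add gen_ideal_0)

lemma gen_ideal_mono: "S \<subseteq> T \<Longrightarrow> gen_ideal S \<subseteq> gen_ideal T"
  by (rule gen_ideal_min[OF is_ideal_gen]) (auto intro: gen_ideal_base)

lemma is_ideal_pre: assumes "is_ideal K" shows "is_ideal {y. s * y \<in> K}"
  unfolding is_ideal_def
proof (intro conjI ballI allI)
  show "0 \<in> {y. s * y \<in> K}" using assms by (simp add: is_ideal_def)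
next
  fix x y assume "x \<in> {y. s * y \<in> K}" "y \<in> {y. s * y \<in> K}"
  then show "x + y \<in> {y. s * y \<in> K}" using assms by (simp add: is_ideal_def distrib_left)
next
  fix r x assume "x \<in> {y. s * y \<in> K}"
  then have "r * (s * x) \<in> K" using assms by (simp add: is_ideal_def)
  then show "r * x \<in> {y. s * y \<in> K}" by (simp add: mult.left_commute)
qed

lemma ideal_prod_gen:
  "ideal_prod (gen_ideal S) (gen_ideal T) = gen_ideal {s * t | s t. s \<in> S \<and> t \<in> T}"
proof
  show "gen_ideal {s * t | s t. s \<in> S \<and> t \<in> T} \<subseteq> ideal_prod (gen_ideal S) (gen_ideal T)"
    unfolding ideal_prod_def by (rule gen_ideal_mono) (auto intro: gen_ideal_base)
next
  let ?K = "gen_ideal {s * t | s t. s \<in> S \<and> t \<in> T}"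
  have 1: "s * y \<in> ?K" if "s \<in> S" "y \<in> gen_ideal T" for s y
  proof -
    have "gen_ideal T \<subseteq> {y. s * y \<in> ?K}"
    proof (rule gen_ideal_min)
      show "is_ideal {y. s * y \<in> ?K}" by (rule is_ideal_pre[OF is_ideal_gen])
      show "T \<subseteq> {y. s * y \<in> ?K}" using that by (auto intro: gen_ideal_base)
    qed
    then show ?thesis using that by auto
  qed
  have 2: "x * y \<in> ?K" if "x \<in> gen_ideal S" "y \<in> gen_ideal T" for x y
  proof -
    have "gen_ideal S \<subseteq> {x. x * y \<in> ?K}"
    proof (rule gen_ideal_min)
      show "is_ideal {x. x * y \<in> ?K}" using is_ideal_pre[OF is_ideal_gen, of y] by (simp add: mult.commute)
      show "S \<subseteq> {x. x * y \<in> ?K}" using that 1 by auto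
    qed
    then show ?thesis using that by auto
  qed
  show "ideal_prod (gen_ideal S) (gen_ideal T) \<subseteq> ?K"
    unfolding ideal_prod_def by (rule gen_ideal_min[OF is_ideal_gen]) (use 2 in auto)
qed

lemma colon_gen:
  assumes "is_ideal A"
  shows "f \<in> ideal_colon A (gen_ideal T) \<longleftrightarrow> (\<forall>t\<in>T. f * t \<in> A)"
proof
  assume "f \<in> ideal_colon A (gen_ideal T)" then show "\<forall>t\<in>T. f * t \<in> A"
    unfolding ideal_colon_def by (auto intro: gen_ideal_base)
next
  assume h: "\<forall>t\<in>T. f * t \<in> A"
  have "gen_ideal T \<subseteq> {g. f * g \<in> A}"
  proof (rule gen_ideal_min)
    show "is_ideal {g. f * g \<in> A}" by (rule is_ideal_pre[OF assms])
  qed (use h in auto)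
  then show "f \<in> ideal_colon A (gen_ideal T)" unfolding ideal_colon_def by auto
qed



definition mon :: "nat \<Rightarrow> nat \<Rightarrow> 'a::field poly poly" where
  "mon a c = monom (monom 1 a) c"

definition cf :: "'a::field poly poly \<Rightarrow> nat \<Rightarrow> nat \<Rightarrow> 'a" where
  "cf f a c = coeff (coeff f c) a"

definition monp :: "nat \<times> nat \<Rightarrow> 'a::field poly poly" where
  "monp g = mon (fst g) (snd g)"

definition mideal :: "(nat \<times> nat) set \<Rightarrow> 'a::field poly poly set" where
  "mideal G = {f. \<forall>a c. cf f a c \<noteq> 0 \<longrightarrow> (\<exists>g\<in>G. fst g \<le> a \<and> snd g \<le> c)}"

lemma mon_mult: "mon a c * mon a' c' = (mon (a + a') (c + c') :: 'a::field poly poly)"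
  by (simp add: mon_def mult_monom)

lemma var_x_pow: "var_x ^ a = (mon a 0 :: 'a::field poly poly)"
  by (simp add: var_x_def mon_def monom_power)

lemma mon_0: "mon 0 0 = (1 :: 'a::field poly poly)"
  by (simp add: mon_def monom_0 one_pCons)

lemma var_y_pow: "var_y ^ c = (mon 0 c :: 'a::field poly poly)"
  by (simp add: var_y_def mon_def monom_power monom_0 flip: one_pCons)

lemma xy_pow: "var_x ^ a * var_y ^ c = (mon a c :: 'a::field poly poly)"
  by (simp add: var_x_pow var_y_pow mon_mult)

lemma cf_mult_mon: "cf (h * mon a c) a' c' =
   (if a \<le> a' \<and> c \<le> c' then cf h (a' - a) (c' - c) else 0)"
  by (simp add: cf_def mon_def mult.commute[of h] coeff_monom_mult mult.commute[of _ "monom 1 a"])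

lemma cf_mon: "cf (mon a c :: 'a::field poly poly) a' c' = (if a' = a \<and> c' = c then 1 else 0)"
  by (simp add: cf_def mon_def)

lemma cf_sum: "cf (\<Sum>x\<in>A. p x) a c = (\<Sum>x\<in>A. cf (p x) a c)"
  by (simp add: cf_def coeff_sum)

lemma gen_mon: "gen_ideal (monp ` G) = (mideal G :: 'a::field poly poly set)"
proof
  show "gen_ideal (monp ` G) \<subseteq> (mideal G :: 'a::field poly poly set)"
  proof
    fix f :: "'a poly poly" assume "f \<in> gen_ideal (monp ` G)"
    then obtain F k where F: "finite F" "F \<subseteq> monp ` G" "f = (\<Sum>g\<in>F. k g * g)"
      unfolding gen_ideal_def by blast
    show "f \<in> mideal G" unfolding mideal_def
    proof (intro CollectI allI impI)
      fix a c assume "cf f a c \<noteq> 0"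
      then have "(\<Sum>g\<in>F. cf (k g * g) a c) \<noteq> 0" using F by (simp add: cf_sum)
      then obtain g where g: "g \<in> F" "cf (k g * g) a c \<noteq> 0" by (meson sum.neutral)
      then obtain g1 g2 where "(g1, g2) \<in> G" "g = mon g1 g2" using F by (auto simp: monp_def)
      moreover have "g1 \<le> a \<and> g2 \<le> c" using g(2) \<open>g = mon g1 g2\<close>
        by (auto simp: cf_mult_mon split: if_splits)
      ultimately show "\<exists>g\<in>G. fst g \<le> a \<and> snd g \<le> c"
        by (intro bexI[of _ "(g1, g2)"]) auto
    qed
  qed
next
  show "(mideal G :: 'a::field poly poly set) \<subseteq> gen_ideal (monp ` G)"
  proof
    fix f :: "'a poly poly" assume f: "f \<in> mideal G"
    have trm: "monom (monom (cf f a c) a) c \<in> gen_ideal (monp ` G)" for a c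
    proof (cases "cf f a c = 0")
      case True then show ?thesis by (simp add: gen_ideal_0)
    next
      case False
      then obtain g where g: "g \<in> G" "fst g \<le> a" "snd g \<le> c" using f unfolding mideal_def by blast
      have "monom (monom (cf f a c) a) c = monom (monom (cf f a c) (a - fst g)) (c - snd g) * mon (fst g) (snd g)"
        using g by (simp add: mon_def mult_monom)
      also have "\<dots> \<in> gen_ideal (monp ` G)"
        using g by (intro gen_ideal_mult gen_ideal_base) (auto simp: monp_def)
      finally show ?thesis .
    qed
    have "f = (\<Sum>c\<le>degree f. monom (coeff f c) c)" by (simp add: poly_as_sum_of_monoms)
    also have "\<dots> = (\<Sum>c\<le>degree f. monom (\<Sum>a\<le>degree (coeff f c). monom (cf f a c) a) c)"
      by (simp add: cf_def poly_as_sum_of_monoms)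
    also have "\<dots> = (\<Sum>c\<le>degree f. \<Sum>a\<le>degree (coeff f c). monom (monom (cf f a c) a) c)"
      by (simp add: monom_sum)
    also have "\<dots> \<in> gen_ideal (monp ` G)"
      by (intro gen_ideal_sum trm)
    finally show "f \<in> gen_ideal (monp ` G)" .
  qed
qed

lemma is_ideal_mideal: "is_ideal (mideal G :: 'a::field poly poly set)"
  using is_ideal_gen[of "monp ` G"] by (simp add: gen_mon)

definition pls :: "(nat \<times> nat) set \<Rightarrow> (nat \<times> nat) set \<Rightarrow> (nat \<times> nat) set" where
  "pls A B = {(fst x + fst y, snd x + snd y) | x y. x \<in> A \<and> y \<in> B}"

lemma prod_mon: "ideal_prod (gen_ideal (monp ` A)) (gen_ideal (monp ` B)) =
   (gen_ideal (monp ` pls A B) :: 'a::field poly poly set)"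
proof -
  have "{s * t | s t. s \<in> (monp ` A :: 'a poly poly set) \<and> t \<in> monp ` B} = monp ` pls A B"
  proof (rule set_eqI, rule iffI)
    fix z :: "'a poly poly" assume "z \<in> {s * t | s t. s \<in> (monp ` A :: 'a poly poly set) \<and> t \<in> monp ` B}"
    then obtain x y where xy: "x \<in> A" "y \<in> B" "z = monp x * monp y" by auto
    then have "(fst x + fst y, snd x + snd y) \<in> pls A B" unfolding pls_def by blast
    moreover have "z = monp (fst x + fst y, snd x + snd y)" using xy by (simp add: monp_def mon_mult)
    ultimately show "z \<in> monp ` pls A B" by blast
  next
    fix z :: "'a poly poly" assume "z \<in> monp ` pls A B"
    then obtain x y where xy: "x \<in> A" "y \<in> B" "z = monp (fst x + fst y, snd x + snd y)"
      by (auto simp: pls_def)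
    then have "z = monp x * monp y" by (simp add: monp_def mon_mult)
    then show "z \<in> {s * t | s t. s \<in> (monp ` A :: 'a poly poly set) \<and> t \<in> monp ` B}"
      using xy by blast
  qed
  then show ?thesis by (simp add: ideal_prod_gen)
qed

definition cond :: "(nat \<times> nat) set \<Rightarrow> (nat \<times> nat) set \<Rightarrow> nat \<Rightarrow> nat \<Rightarrow> bool" where
  "cond A B a c \<longleftrightarrow> (\<forall>\<beta>\<in>B. \<exists>\<alpha>\<in>A. fst \<alpha> \<le> a + fst \<beta> \<and> snd \<alpha> \<le> c + snd \<beta>)"

lemma colon_mon:
  "(f :: 'a::field poly poly) \<in> ideal_colon (gen_ideal (monp ` A)) (gen_ideal (monp ` B)) \<longleftrightarrow>
   (\<forall>a c. cf f a c \<noteq> 0 \<longrightarrow> cond A B a c)"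
proof -
  have "f \<in> ideal_colon (gen_ideal (monp ` A)) (gen_ideal (monp ` B)) \<longleftrightarrow>
        (\<forall>\<beta>\<in>B. f * mon (fst \<beta>) (snd \<beta>) \<in> mideal A)"
    apply (subst colon_gen[OF is_ideal_gen])
    unfolding gen_mon by (simp add: monp_def)
  also have "\<dots> \<longleftrightarrow> (\<forall>a c. cf f a c \<noteq> 0 \<longrightarrow> cond A B a c)"
  proof
    assume h: "\<forall>\<beta>\<in>B. f * mon (fst \<beta>) (snd \<beta>) \<in> mideal A"
    show "\<forall>a c. cf f a c \<noteq> 0 \<longrightarrow> cond A B a c" unfolding cond_def
    proof (intro allI impI ballI)
      fix a c \<beta> assume "cf f a c \<noteq> 0" "\<beta> \<in> B"
      then have "cf (f * mon (fst \<beta>) (snd \<beta>)) (a + fst \<beta>) (c + snd \<beta>) \<noteq> 0"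
        by (simp add: cf_mult_mon)
      then show "\<exists>\<alpha>\<in>A. fst \<alpha> \<le> a + fst \<beta> \<and> snd \<alpha> \<le> c + snd \<beta>"
        using h \<open>\<beta> \<in> B\<close> unfolding mideal_def by blast
    qed
  next
    assume h: "\<forall>a c. cf f a c \<noteq> 0 \<longrightarrow> cond A B a c"
    show "\<forall>\<beta>\<in>B. f * mon (fst \<beta>) (snd \<beta>) \<in> mideal A" unfolding mideal_def
    proof (intro ballI CollectI allI impI)
      fix \<beta> a' c' assume b: "\<beta> \<in> B" and nz: "cf (f * mon (fst \<beta>) (snd \<beta>)) a' c' \<noteq> 0"
      then have le: "fst \<beta> \<le> a'" "snd \<beta> \<le> c'" and "cf f (a' - fst \<beta>) (c' - snd \<beta>) \<noteq> 0"
        by (auto simp: cf_mult_mon split: if_splits)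
      then have "cond A B (a' - fst \<beta>) (c' - snd \<beta>)" using h by blast
      then obtain \<alpha> where "\<alpha> \<in> A" "fst \<alpha> \<le> a' - fst \<beta> + fst \<beta>" "snd \<alpha> \<le> c' - snd \<beta> + snd \<beta>"
        using b unfolding cond_def by blast
      then show "\<exists>g\<in>A. fst g \<le> a' \<and> snd g \<le> c'" using le by (intro bexI[of _ \<alpha>]) auto
    qed
  qed
  finally show ?thesis .
qed



definition Eset :: "nat \<Rightarrow> nat \<Rightarrow> nat \<Rightarrow> (nat \<times> nat) set" where
  "Eset d b n = {(d*i + b*k, d*j + (d-b)*k) | i j k. i + j + k = n}"

definition Aset :: "nat \<Rightarrow> nat \<Rightarrow> nat \<Rightarrow> (nat \<times> nat) set" where
  "Aset d b l = {(d*i + b*k, d*j + (d-b)*k) | i j k. i + j + k = l \<and> k < l}"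

definition GI :: "nat \<Rightarrow> nat \<Rightarrow> (nat \<times> nat) set" where
  "GI d b = {(d,0),(0,d),(b,d-b)}"
definition GJ :: "nat \<Rightarrow> (nat \<times> nat) set" where
  "GJ d = {(d,0),(0,d)}"

lemma mem_E: "i + j + k = n \<Longrightarrow> (d*i + b*k, d*j + (d-b)*k) \<in> Eset d b n"
  unfolding Eset_def by blast

lemma mem_A: "i + j + k = l \<Longrightarrow> k < l \<Longrightarrow> (d*i + b*k, d*j + (d-b)*k) \<in> Aset d b l"
  unfolding Aset_def by blast

lemma mem_pls: "x \<in> A \<Longrightarrow> y \<in> B \<Longrightarrow> (fst x + fst y, snd x + snd y) \<in> pls A B"
  unfolding pls_def by blast

lemma pls_E: "pls (GI d b) (Eset d b n) = Eset d b (Suc n)"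
proof (rule set_eqI, rule iffI)
  fix z assume "z \<in> pls (GI d b) (Eset d b n)"
  then obtain x y where x: "x \<in> GI d b" and y: "y \<in> Eset d b n"
    and zxy: "z = (fst x + fst y, snd x + snd y)"
    unfolding pls_def by blast
  from y obtain i j k where ijk: "i + j + k = n" and y': "y = (d*i + b*k, d*j + (d-b)*k)"
    unfolding Eset_def by blast
  have z: "z = (fst x + (d*i + b*k), snd x + (d*j + (d-b)*k))" using zxy y' by simp
  from x consider "x = (d,0)" | "x = (0,d)" | "x = (b,d-b)" unfolding GI_def by blast
  then show "z \<in> Eset d b (Suc n)"
  proof cases
    case 1
    then have "z = (d*Suc i + b*k, d*j + (d-b)*k)" using z by simp
    then show ?thesis using mem_E[of "Suc i" j k "Suc n" d b] ijk by simp
  next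
    case 2
    then have "z = (d*i + b*k, d*Suc j + (d-b)*k)" using z by simp
    then show ?thesis using mem_E[of i "Suc j" k "Suc n" d b] ijk by simp
  next
    case 3
    then have "z = (d*i + b*Suc k, d*j + (d-b)*Suc k)" using z by (simp add: mult_Suc_right add_ac)
    then show ?thesis using mem_E[of i j "Suc k" "Suc n" d b] ijk by simp
  qed
next
  fix z assume "z \<in> Eset d b (Suc n)"
  then obtain i j k where ijk: "i + j + k = Suc n" and z: "z = (d*i + b*k, d*j + (d-b)*k)"
    unfolding Eset_def by blast
  show "z \<in> pls (GI d b) (Eset d b n)"
  proof (cases i)
    case (Suc i')
    have "((d,0)::nat\<times>nat) \<in> GI d b" by (simp add: GI_def)
    from mem_pls[OF this mem_E[of i' j k n d b]] show ?thesis using ijk z Suc by (simp add: add.assoc)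
  next
    case 0
    show ?thesis
    proof (cases j)
      case (Suc j')
      have "((0,d)::nat\<times>nat) \<in> GI d b" by (simp add: GI_def)
      from mem_pls[OF this mem_E[of i j' k n d b]] show ?thesis using ijk z Suc by (simp add: add.assoc)
    next
      case 0
      then obtain k' where k: "k = Suc k'" using ijk \<open>i = 0\<close> by (cases k) auto
      have "((b,d-b)::nat\<times>nat) \<in> GI d b" by (simp add: GI_def)
      from mem_pls[OF this mem_E[of i j k' n d b]] show ?thesis using ijk z k \<open>i = 0\<close> 0
        by (simp add: mult_Suc_right add_ac)
    qed
  qed
qed

lemma pls_A: assumes "1 \<le> l" shows "pls (GJ d) (Eset d b (l - 1)) = Aset d b l"
proof (rule set_eqI, rule iffI)
  fix z assume "z \<in> pls (GJ d) (Eset d b (l - 1))"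
  then obtain x y where x: "x \<in> GJ d" and y: "y \<in> Eset d b (l - 1)"
    and zxy: "z = (fst x + fst y, snd x + snd y)"
    unfolding pls_def by blast
  from y obtain i j k where ijk: "i + j + k = l - 1" and y': "y = (d*i + b*k, d*j + (d-b)*k)"
    unfolding Eset_def by blast
  have z: "z = (fst x + (d*i + b*k), snd x + (d*j + (d-b)*k))" using zxy y' by simp
  from x consider "x = (d,0)" | "x = (0,d)" unfolding GJ_def by blast
  then show "z \<in> Aset d b l"
  proof cases
    case 1
    then have "z = (d*Suc i + b*k, d*j + (d-b)*k)" using z by simp
    then show ?thesis using mem_A[of "Suc i" j k l d b] ijk assms by simp
  next
    case 2
    then have "z = (d*i + b*k, d*Suc j + (d-b)*k)" using z by simp
    then show ?thesis using mem_A[of i "Suc j" k l d b] ijk assms by simp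
  qed
next
  fix z assume "z \<in> Aset d b l"
  then obtain i j k where ijk: "i + j + k = l" "k < l" and z: "z = (d*i + b*k, d*j + (d-b)*k)"
    unfolding Aset_def by blast
  show "z \<in> pls (GJ d) (Eset d b (l - 1))"
  proof (cases i)
    case (Suc i')
    have "((d,0)::nat\<times>nat) \<in> GJ d" by (simp add: GJ_def)
    have "i' + j + k = l - 1" using ijk Suc by simp
    from mem_pls[OF \<open>(d,0) \<in> GJ d\<close> mem_E[OF this, of d b]] show ?thesis using z Suc by (simp add: add.assoc)
  next
    case 0
    then obtain j' where j: "j = Suc j'" using ijk by (cases j) auto
    have "((0,d)::nat\<times>nat) \<in> GJ d" by (simp add: GJ_def)
    have "i + j' + k = l - 1" using ijk j by simp
    from mem_pls[OF \<open>(0,d) \<in> GJ d\<close> mem_E[OF this, of d b]] show ?thesis using z j 0 by (simp add: add.assoc)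
  qed
qed

lemma gen_one: "gen_ideal (monp ` {(0,0)}) = (UNIV :: 'a::field poly poly set)"
proof -
  have "f \<in> gen_ideal (monp ` {(0,0)})" for f :: "'a poly poly"
  proof -
    have "f * 1 \<in> gen_ideal (monp ` {(0,0)})"
      by (intro gen_ideal_mult gen_ideal_base) (simp add: monp_def mon_0)
    then show ?thesis by simp
  qed
  then show ?thesis by auto
qed

lemma E0: "Eset d b 0 = {(0,0)}"
  unfolding Eset_def by auto

lemma I_mon: "I_id d b = (gen_ideal (monp ` GI d b) :: 'a::field poly poly set)"
  unfolding I_id_def GI_def by (simp add: monp_def var_x_pow var_y_pow mon_mult)

lemma J_mon: "J_id d = (gen_ideal (monp ` GJ d) :: 'a::field poly poly set)"
  unfolding J_id_def GJ_def by (simp add: monp_def var_x_pow var_y_pow)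

lemma pow_mon: "ideal_pow (I_id d b) n = (gen_ideal (monp ` Eset d b n) :: 'a::field poly poly set)"
proof (induction n)
  case 0
  have "gen_ideal (monp ` Eset d b 0) = (UNIV :: 'a::field poly poly set)"
    by (simp only: E0 gen_one)
  then show ?case by simp
next
  case (Suc n) then show ?case by (simp only: ideal_pow.simps I_mon prod_mon pls_E)
qed

lemma colonI_mon: assumes "1 \<le> l"
  shows "(f :: 'a::field poly poly) \<in> colonI d b l \<longleftrightarrow>
    (\<forall>a c. cf f a c \<noteq> 0 \<longrightarrow> cond (Aset d b l) (Eset d b l) a c)"
  unfolding colonI_def pow_mon J_mon prod_mon pls_A[OF assms] by (rule colon_mon)

lemma two_mon: "(f :: 'a::field poly poly) \<in> gen_ideal {var_x ^ s, var_y ^ t} \<longleftrightarrow>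
    (\<forall>a c. cf f a c \<noteq> 0 \<longrightarrow> s \<le> a \<or> t \<le> c)"
proof -
  have "{var_x ^ s, var_y ^ t} = (monp ` {(s,0),(0,t)} :: 'a poly poly set)"
    by (simp add: monp_def var_x_pow var_y_pow)
  then have "gen_ideal {var_x ^ s, var_y ^ t} = (mideal {(s,0),(0,t)} :: 'a poly poly set)"
    by (simp only: gen_mon)
  then show ?thesis by (simp add: mideal_def)
qed

lemma x_in_colon: assumes "1 \<le> l"
  shows "(var_x ^ s :: 'a::field poly poly) \<in> colonI d b l \<longleftrightarrow> cond (Aset d b l) (Eset d b l) s 0"
  using assms by (simp add: colonI_mon var_x_pow cf_mon)

lemma y_in_colon: assumes "1 \<le> l"
  shows "(var_y ^ t :: 'a::field poly poly) \<in> colonI d b l \<longleftrightarrow> cond (Aset d b l) (Eset d b l) 0 t"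
  using assms by (simp add: colonI_mon var_y_pow cf_mon)



lemma sumA: assumes "b \<le> d" "\<alpha> \<in> Aset d b l" shows "fst \<alpha> + snd \<alpha> = d * l"
proof -
  obtain i j k where "i + j + k = l" "\<alpha> = (d*i + b*k, d*j + (d-b)*k)"
    using assms(2) unfolding Aset_def by blast
  moreover have "(d-b)*k + b*k = d*k" using assms(1) by (simp add: add_mult_distrib[symmetric])
  ultimately show ?thesis by (simp add: algebra_simps) (metis add.assoc add.left_commute distrib_left)
qed

lemma beta0: "(b*l, (d-b)*l) \<in> Eset d b l"
  using mem_E[of 0 0 l l d b] by simp

lemma E_sub: "Eset d b l \<subseteq> Aset d b l \<union> {(b*l, (d-b)*l)}"
proof
  fix z assume "z \<in> Eset d b l"
  then obtain i j k where ijk: "i + j + k = l" and z: "z = (d*i + b*k, d*j + (d-b)*k)"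
    unfolding Eset_def by blast
  show "z \<in> Aset d b l \<union> {(b*l, (d-b)*l)}"
  proof (cases "k < l")
    case True then show ?thesis using mem_A[OF ijk True] z by simp
  next
    case False then have "i = 0" "j = 0" "k = l" using ijk by auto
    then show ?thesis using z by simp
  qed
qed

lemma beta0_A: assumes "b \<le> d" "1 \<le> d" "d \<le> l" shows "(b*l, (d-b)*l) \<in> Aset d b l"
proof -
  obtain m where l: "l = d + m" using assms(3) le_Suc_ex by blast
  have 1: "b + (d - b) + m = l" using assms l by simp
  have 2: "m < l" using assms l by simp
  have "d*b + b*m = b*l" using l by (simp add: algebra_simps)
  moreover have "d*(d-b) + (d-b)*m = (d-b)*l" using l by (simp add: algebra_simps)
  ultimately show ?thesis using mem_A[OF 1 2, of d b] by simp
qed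

definition PS :: "nat \<Rightarrow> nat \<Rightarrow> nat \<Rightarrow> nat \<Rightarrow> bool" where
  "PS d b l a \<longleftrightarrow> (\<exists>\<alpha>\<in>Aset d b l. b*l \<le> fst \<alpha> \<and> fst \<alpha> \<le> a + b*l)"
definition PT :: "nat \<Rightarrow> nat \<Rightarrow> nat \<Rightarrow> nat \<Rightarrow> bool" where
  "PT d b l c \<longleftrightarrow> (\<exists>\<alpha>\<in>Aset d b l. fst \<alpha> \<le> b*l \<and> b*l \<le> c + fst \<alpha>)"

lemma cond_ge: assumes "b \<le> d" "1 \<le> d" "d \<le> l" shows "cond (Aset d b l) (Eset d b l) a c"
  unfolding cond_def
proof
  fix \<beta> assume "\<beta> \<in> Eset d b l"
  then have "\<beta> \<in> Aset d b l" using E_sub beta0_A[OF assms] by blast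
  then show "\<exists>\<alpha>\<in>Aset d b l. fst \<alpha> \<le> a + fst \<beta> \<and> snd \<alpha> \<le> c + snd \<beta>" by force
qed

lemma cond_lt: assumes "b \<le> d"
  shows "cond (Aset d b l) (Eset d b l) a c \<longleftrightarrow> PS d b l a \<or> PT d b l c"
proof -
  have bd: "b*l + (d-b)*l = d*l" using assms by (simp add: add_mult_distrib[symmetric])
  have "cond (Aset d b l) (Eset d b l) a c \<longleftrightarrow>
     (\<exists>\<alpha>\<in>Aset d b l. fst \<alpha> \<le> a + b*l \<and> snd \<alpha> \<le> c + (d-b)*l)"
  proof
    assume "cond (Aset d b l) (Eset d b l) a c"
    then have "\<exists>\<alpha>\<in>Aset d b l. fst \<alpha> \<le> a + fst (b*l, (d-b)*l) \<and> snd \<alpha> \<le> c + snd (b*l, (d-b)*l)"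
      using beta0[of b l d] unfolding cond_def by (rule bspec)
    then show "\<exists>\<alpha>\<in>Aset d b l. fst \<alpha> \<le> a + b*l \<and> snd \<alpha> \<le> c + (d-b)*l" by simp
  next
    assume h: "\<exists>\<alpha>\<in>Aset d b l. fst \<alpha> \<le> a + b*l \<and> snd \<alpha> \<le> c + (d-b)*l"
    show "cond (Aset d b l) (Eset d b l) a c" unfolding cond_def
    proof
      fix \<beta> assume "\<beta> \<in> Eset d b l"
      then have "\<beta> \<in> Aset d b l \<or> \<beta> = (b*l, (d-b)*l)" using E_sub by blast
      then show "\<exists>\<alpha>\<in>Aset d b l. fst \<alpha> \<le> a + fst \<beta> \<and> snd \<alpha> \<le> c + snd \<beta>"
        using h by force
    qed
  qed
  also have "\<dots> \<longleftrightarrow> PS d b l a \<or> PT d b l c"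
  proof -
    have "(fst \<alpha> \<le> a + b*l \<and> snd \<alpha> \<le> c + (d-b)*l) \<longleftrightarrow>
          (b*l \<le> fst \<alpha> \<and> fst \<alpha> \<le> a + b*l) \<or> (fst \<alpha> \<le> b*l \<and> b*l \<le> c + fst \<alpha>)"
      if "\<alpha> \<in> Aset d b l" for \<alpha>
      using sumA[OF assms that] bd by linarith
    then show ?thesis unfolding PS_def PT_def by blast
  qed
  finally show ?thesis .
qed

lemma least_mono:
  fixes P :: "nat \<Rightarrow> bool"
  assumes "\<And>x y. x \<le> y \<Longrightarrow> P x \<Longrightarrow> P y" "P w"
  shows "P a \<longleftrightarrow> (LEAST x. P x) \<le> a"
proof
  assume "P a" then show "(LEAST x. P x) \<le> a" by (rule Least_le)
next
  assume "(LEAST x. P x) \<le> a"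
  moreover have "P (LEAST x. P x)" using assms(2) by (rule LeastI)
  ultimately show "P a" using assms(1) by blast
qed

lemma PS_mono: "x \<le> y \<Longrightarrow> PS d b l x \<Longrightarrow> PS d b l y"
  unfolding PS_def by force
lemma PT_mono: "x \<le> y \<Longrightarrow> PT d b l x \<Longrightarrow> PT d b l y"
  unfolding PT_def by force

lemma PS_wit: assumes "b \<le> d" "1 \<le> l" shows "PS d b l (d*l)"
proof -
  have "(d*l, 0) \<in> Aset d b l" using mem_A[of l 0 0 l d b] assms by simp
  moreover have "b*l \<le> d*l" using assms by simp
  ultimately show ?thesis unfolding PS_def by force
qed

lemma PT_wit: assumes "1 \<le> l" shows "PT d b l (b*l)"
proof -
  have "(0, d*l) \<in> Aset d b l" using mem_A[of 0 l 0 l d b] assms by simp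
  then show ?thesis unfolding PT_def by force
qed

lemma notQ: assumes "coprime d b" "l < d" "\<alpha> \<in> Aset d b l" shows "fst \<alpha> \<noteq> b*l"
proof
  assume eq: "fst \<alpha> = b*l"
  obtain i j k where ijk: "i + j + k = l" "k < l" and a: "\<alpha> = (d*i + b*k, d*j + (d-b)*k)"
    using assms(3) unfolding Aset_def by blast
  obtain m where m: "l = k + m" "0 < m" using ijk(2) by (metis add_diff_inverse_nat less_imp_not_less zero_less_diff)
  have "d*i + b*k = b*k + b*m" using eq a m by (simp add: algebra_simps)
  then have "d*i = b*m" by simp
  then have "d dvd b*m" by (metis dvd_triv_left)
  then have "d dvd m" using assms(1) by (simp add: coprime_dvd_mult_right_iff)
  then have "d \<le> m" using m(2) by (simp add: dvd_imp_le)
  then show False using m assms(2) by simp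
qed



lemma NT_t:
  assumes "l < d" "b < d" "2 \<le> d" "(b*u) mod d = 1" "0 < u" "u < d" "coprime b d"
  shows "(\<exists>\<alpha>\<in>Aset d b l. fst \<alpha> + 1 = b*l) \<longleftrightarrow> u \<le> l"
proof
  assume "\<exists>\<alpha>\<in>Aset d b l. fst \<alpha> + 1 = b*l"
  then obtain i j k where ijk: "i + j + k = l" "k < l" and eq: "d*i + b*k + 1 = b*l"
    unfolding Aset_def by auto
  obtain m where m: "l = k + m" "0 < m" using ijk(2) by (metis add_diff_inverse_nat less_imp_not_less zero_less_diff)
  have "d*i + 1 = b*m" using eq m(1) by (simp add: algebra_simps)
  then have "(b*m) mod d = 1" using assms(3) by (metis mod_mult_self3 mult.commute mod_less one_less_numeral_iff
        semiring_norm(76) less_le_trans)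
  then have "[b*m = b*u] (mod d)" using assms(4) by (simp add: cong_def)
  then have "[m = u] (mod d)" using assms(7) by (simp add: cong_mult_lcancel_nat)
  then have "m = u" using assms(1,6) m(1) by (intro cong_less_modulus_unique_nat) auto
  then show "u \<le> l" using m by simp
next
  assume ul: "u \<le> l"
  define i0 where "i0 = b*u div d"
  have bu: "b*u = d*i0 + 1" using div_mult_mod_eq[of "b*u" d] assms(4) unfolding i0_def
    by (simp add: mult.commute)
  have "b*u < d*u" using assms by simp
  then have "d*i0 < d*u" using bu by linarith
  then have i0u: "i0 < u" by simp
  obtain w where w: "l = u + w" using ul le_Suc_ex by blast
  have 1: "i0 + (u - i0) + w = l" using i0u w by simp
  have 2: "w < l" using w assms(5) by simp
  have "(d*i0 + b*w, d*(u-i0) + (d-b)*w) \<in> Aset d b l" by (rule mem_A[OF 1 2])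
  moreover have "d*i0 + b*w + 1 = b*l" using bu w by (simp add: algebra_simps)
  ultimately show "\<exists>\<alpha>\<in>Aset d b l. fst \<alpha> + 1 = b*l" by force
qed

lemma NT_s:
  assumes "l < d" "b < d" "2 \<le> d" "(b*u) mod d = 1" "0 < u" "u < d" "coprime b d" "0 < b"
  shows "(\<exists>\<alpha>\<in>Aset d b l. fst \<alpha> = b*l + 1) \<longleftrightarrow> d - u \<le> l"
proof -
  define v where "v = d - u"
  have v: "0 < v" "v < d" "u + v = d" using assms unfolding v_def by auto
  define i0 where "i0 = b*u div d"
  have bu: "b*u = d*i0 + 1" using div_mult_mod_eq[of "b*u" d] assms(4) unfolding i0_def
    by (simp add: mult.commute)
  have "b*u < b*d" using assms by simp
  then have "d*i0 < d*b" using bu mult.commute[of b d] by linarith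
  then have i0b: "i0 < b" by simp
  define i1 where "i1 = b - i0"
  have s1: "b*u + b*v = d*b" using v(3) by (metis add_mult_distrib2 mult.commute)
  have s2: "d*i1 + d*i0 = d*b" using i0b unfolding i1_def by (simp add: add_mult_distrib2[symmetric])
  have bv: "b*v + 1 = d*i1" using s1 s2 bu by linarith
  have "(b*v + 1) mod d = 0" using bv by simp
  show ?thesis unfolding v_def[symmetric]
  proof
    assume "\<exists>\<alpha>\<in>Aset d b l. fst \<alpha> = b*l + 1"
    then obtain i j k where ijk: "i + j + k = l" "k < l" and eq: "d*i + b*k = b*l + 1"
      unfolding Aset_def by auto
    obtain m where m: "l = k + m" "0 < m" using ijk(2) by (metis add_diff_inverse_nat less_imp_not_less zero_less_diff)
    have "d*i = b*m + 1" using eq m(1) by (simp add: algebra_simps)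
    then have "[b*m + 1 = b*v + 1] (mod d)" using bv unfolding cong_def by (metis mod_mult_self1_is_0)
    then have "[b*m = b*v] (mod d)" using cong_add_rcancel_nat[of "b*m" 1 "b*v" d] by blast
    then have "[m = v] (mod d)" using assms(7) by (simp add: cong_mult_lcancel_nat)
    then have "m = v" using assms(1) v(2) m(1) by (intro cong_less_modulus_unique_nat) auto
    then show "v \<le> l" using m by simp
  next
    assume vl: "v \<le> l"
    have "b*v < d*v" using assms v by simp
    then have "d*i1 \<le> d*v" using bv by linarith
    then have i1v: "i1 \<le> v" using assms(3) by simp
    obtain w where w: "l = v + w" using vl le_Suc_ex by blast
    have 1: "i1 + (v - i1) + w = l" using i1v w by simp
    have 2: "w < l" using w v by simp
    have "(d*i1 + b*w, d*(v-i1) + (d-b)*w) \<in> Aset d b l" by (rule mem_A[OF 1 2])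
    moreover have "d*i1 + b*w = b*l + 1" using bv w by (simp add: algebra_simps)
    ultimately show "\<exists>\<alpha>\<in>Aset d b l. fst \<alpha> = b*l + 1" by force
  qed
qed



lemma gen_one': "(x::'r::comm_ring_1) \<in> gen_ideal {1}"
  using gen_ideal_mult[OF gen_ideal_base[of 1 "{1}"], of x] by simp

lemma per_l:
  fixes K :: "'a::field itself"
  assumes "b \<le> d" "2 \<le> d" "coprime d b" "1 \<le> l"
  shows "(colonI d b l :: 'a poly poly set) = gen_ideal {var_x ^ s_exp K d b l, var_y ^ t_exp K d b l}
     \<and> (s_exp K d b l = 1 \<longleftrightarrow> l < d \<and> (\<exists>\<alpha>\<in>Aset d b l. fst \<alpha> = b*l + 1))
     \<and> (t_exp K d b l = 1 \<longleftrightarrow> l < d \<and> (\<exists>\<alpha>\<in>Aset d b l. fst \<alpha> + 1 = b*l))"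
proof -
  let ?A = "Aset d b l" and ?E = "Eset d b l"
  have sdef: "s_exp K d b l = (LEAST s. cond ?A ?E s 0)"
    by (simp add: s_exp_def x_in_colon[OF assms(4)])
  have tdef: "t_exp K d b l = (LEAST t. cond ?A ?E 0 t)"
    by (simp add: t_exp_def y_in_colon[OF assms(4)])
  show ?thesis
  proof (cases "d \<le> l")
    case True
    have c: "cond ?A ?E a c" for a c using cond_ge[OF assms(1) _ True] assms(2) by simp
    have s0: "s_exp K d b l = 0" unfolding sdef using c by simp
    have t0: "t_exp K d b l = 0" unfolding tdef using c by simp
    have "(colonI d b l :: 'a poly poly set) = gen_ideal {var_x ^ s_exp K d b l, var_y ^ t_exp K d b l}"
      by (rule set_eqI) (simp add: colonI_mon[OF assms(4)] c s0 t0 gen_one')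
    then show ?thesis using s0 t0 True by simp
  next
    case False then have ld: "l < d" by simp
    have c: "cond ?A ?E a c \<longleftrightarrow> PS d b l a \<or> PT d b l c" for a c by (rule cond_lt[OF assms(1)])
    have nq: "\<forall>\<alpha>\<in>?A. fst \<alpha> \<noteq> b*l" using notQ[OF assms(3) ld] by blast
    have nPS0: "\<not> PS d b l 0" using nq unfolding PS_def by force
    have nPT0: "\<not> PT d b l 0" using nq unfolding PT_def by force
    have sS: "s_exp K d b l = (LEAST a. PS d b l a)" unfolding sdef c using nPT0 by simp
    have tT: "t_exp K d b l = (LEAST a. PT d b l a)" unfolding tdef c using nPS0 by simp
    have mS: "PS d b l a \<longleftrightarrow> s_exp K d b l \<le> a" for a
      unfolding sS by (rule least_mono[where P="PS d b l", OF PS_mono PS_wit[OF assms(1,4)]])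
    have mT: "PT d b l a \<longleftrightarrow> t_exp K d b l \<le> a" for a
      unfolding tT by (rule least_mono[where P="PT d b l", OF PT_mono PT_wit[OF assms(4)]])
    have 1: "(colonI d b l :: 'a poly poly set) = gen_ideal {var_x ^ s_exp K d b l, var_y ^ t_exp K d b l}"
      by (rule set_eqI) (simp add: colonI_mon[OF assms(4)] two_mon c mS mT)
    have ps1: "PS d b l 1 \<longleftrightarrow> (\<exists>\<alpha>\<in>?A. fst \<alpha> = b*l + 1)"
    proof
      assume "PS d b l 1"
      then obtain \<alpha> where "\<alpha> \<in> ?A" "b*l \<le> fst \<alpha>" "fst \<alpha> \<le> 1 + b*l" unfolding PS_def by blast
      moreover have "fst \<alpha> \<noteq> b*l" using nq \<open>\<alpha> \<in> ?A\<close> by blast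
      ultimately show "\<exists>\<alpha>\<in>?A. fst \<alpha> = b*l + 1" by (intro bexI[of _ \<alpha>]) auto
    qed (force simp: PS_def)
    have pt1: "PT d b l 1 \<longleftrightarrow> (\<exists>\<alpha>\<in>?A. fst \<alpha> + 1 = b*l)"
    proof
      assume "PT d b l 1"
      then obtain \<alpha> where "\<alpha> \<in> ?A" "fst \<alpha> \<le> b*l" "b*l \<le> 1 + fst \<alpha>" unfolding PT_def by blast
      moreover have "fst \<alpha> \<noteq> b*l" using nq \<open>\<alpha> \<in> ?A\<close> by blast
      ultimately show "\<exists>\<alpha>\<in>?A. fst \<alpha> + 1 = b*l" by (intro bexI[of _ \<alpha>]) auto
    qed (force simp: PT_def)
    have 2: "s_exp K d b l = 1 \<longleftrightarrow> (\<exists>\<alpha>\<in>?A. fst \<alpha> = b*l + 1)"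
      using mS[of 1] mS[of 0] ps1 nPS0 by auto
    have 3: "t_exp K d b l = 1 \<longleftrightarrow> (\<exists>\<alpha>\<in>?A. fst \<alpha> + 1 = b*l)"
      using mT[of 1] mT[of 0] pt1 nPT0 by auto
    show ?thesis using 1 2 3 ld by simp
  qed
qed

theorem mainTheorem10:
  fixes K :: "'a::field itself" and d b :: nat
  assumes "d \<ge> 2" and "1 \<le> b" and "b \<le> d - b" and "gcd d b = 1"
  defines "s \<equiv> s_exp K d b" and "t \<equiv> t_exp K d b"
  shows "(\<forall>l\<ge>1. (colonI d b l :: 'a poly poly set)
                  = gen_ideal {var_x ^ s l, var_y ^ t l})
    \<and> (\<exists>l\<ge>1. s l = 1 \<or> t l = 1)
    \<and> (\<exists>l\<ge>1. s l = 1 \<and> t l = 1)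
    \<and> (LEAST l. l \<ge> 1 \<and> s l = 1 \<and> t l = 1)
          \<ge> d - (LEAST l. l \<ge> 1 \<and> (s l = 1 \<or> t l = 1))"
proof -
  have cop: "coprime d b" using assms(4) by (simp add: coprime_iff_gcd_eq_1)
  then have cop': "coprime b d" by (simp add: coprime_commute)
  have bd: "b \<le> d" "b < d" "0 < b" using assms(1-3) by auto
  obtain x where "[b*x = Suc 0] (mod d)" using cong_solve_coprime_nat[OF cop'] by blast
  define u where "u = x mod d"
  have bu: "(b*u) mod d = 1" using \<open>[b*x = Suc 0] (mod d)\<close> assms(1) unfolding u_def cong_def
    by (simp add: mod_mult_right_eq)
  have u: "u < d" "0 < u" using assms(1) bu unfolding u_def by (auto intro: gr0I)
  have H: "(colonI d b l :: 'a poly poly set) = gen_ideal {var_x ^ s l, var_y ^ t l}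
     \<and> (s l = 1 \<longleftrightarrow> d - u \<le> l \<and> l < d) \<and> (t l = 1 \<longleftrightarrow> u \<le> l \<and> l < d)" if "1 \<le> l" for l
  proof -
    note P = per_l[OF bd(1) assms(1) cop that, of K]
    have "s l = 1 \<longleftrightarrow> d - u \<le> l \<and> l < d"
      using P NT_s[of l d b u] bd assms(1) bu u cop' unfolding s_def by auto
    moreover have "t l = 1 \<longleftrightarrow> u \<le> l \<and> l < d"
      using P NT_t[of l d b u] bd assms(1) bu u cop' unfolding t_def by auto
    ultimately show ?thesis using P unfolding s_def t_def by simp
  qed
  have e1: "\<exists>l\<ge>1. s l = 1 \<or> t l = 1"
    using H[of "min u (d - u)"] u by (intro exI[of _ "min u (d - u)"]) auto
  have e2: "\<exists>l\<ge>1. s l = 1 \<and> t l = 1"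
    using H[of "max u (d - u)"] u by (intro exI[of _ "max u (d - u)"]) auto
  define L1 where "L1 = (LEAST l. l \<ge> 1 \<and> s l = 1 \<and> t l = 1)"
  define L0 where "L0 = (LEAST l. l \<ge> 1 \<and> (s l = 1 \<or> t l = 1))"
  have "L1 \<ge> 1 \<and> s L1 = 1 \<and> t L1 = 1" unfolding L1_def using e2 by (rule LeastI_ex)
  then have L1: "d - u \<le> L1" "u \<le> L1" using H by auto
  have "L0 \<ge> 1 \<and> (s L0 = 1 \<or> t L0 = 1)" unfolding L0_def using e1 by (rule LeastI_ex)
  then have L0: "d - u \<le> L0 \<or> u \<le> L0" using H by auto
  have "L1 \<ge> d - L0" using L0 L1 by auto
  then show ?thesis using H e1 e2 unfolding L1_def L0_def by auto
qed

end
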